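(* Let $\mathcal{B}(\Omega)$ be a strong Bergman-type space. Then $k_0\equiv 1$ on $\Omega$, and for every measurable $u:\Omega\to\mathbb{C}$ such that $u\circ\varphi_z\in L^2(\Omega;d\sigma)$ for all $z\in\Omega$, one has for all $z,w\in\Omega$ $$|U_zT_uk_z(w)|=|P(u\circ\varphi_z)(w)|.$$
   Context: Notation: $A\lesssim B$ means $A\le CB$ for a constant $C$ independent of the relevant variables; $A\simeq B$ means $A\lesssim B$ and $B\lesssim A$. Bergman-type space: $\Omega\subset\mathbb{C}^n$ is a domain containing $0$ such that: (A.1) for each $z\in\Omega$ there is an involutive biholomorphic automorphism $\varphi_z$ of $\Omega$ with $\varphi_z(0)=z$; (A.2) there is a metric $d$ on $\Omega$ with $d(u,v)\simeq d(\varphi_z(u),\varphi_z(v))$ uniformly in $u,v,z$; $(\Omega,d)$ is separable and every closed $d$-ball is compact; $D(z,r)$ denotes the $d$-ball of center $z$ and radius $r$; (A.3) $\sigma$ is a finite Borel measure on $\Omega$, $\mathcal{B}(\Omega)$ is the space of holomorphic functions on $\Omega$ lying in $L^2(\Omega;d\sigma)$ with the $L^2(\sigma)$ norm $\|\cdot\|$ and inner product $\langle\cdot,\cdot\rangle$; $\mathcal{B}(\Omega)$ is a reproducing kernel Hilbert space with reproducing kernel $K_z$ ($f(z)=\langle f,K_z\rangle$) and normalized kernel $k_z=K_z/\|K_z\|$; $z\mapsto\|K_z\|$ is continuous on $(\Omega,d)$; (A.4) the measure $d\lambda(z):=\|K_z\|^2d\sigma(z)$ satisfies $\lambda(E)\simeq\lambda(\varphi_z(E))$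 for Borel $E$, uniformly in $z$, and is doubling: $\lambda(D(z,2r))\le C\lambda(D(z,r))$ for all $z,r>0$; (A.5) $|\langle k_z,k_w\rangle|\simeq 1/\|K_{\varphi_z(w)}\|$ uniformly in $z,w$; (A.6) (Rudin–Forelli estimates) there is a constant $\kappa\in[0,2)$ such that, if $\kappa>0$, for all $r>\kappa>s>0$ one has $\sup_{z\in\Omega}\int_\Omega \frac{|\langle K_z,K_w\rangle|^{(r+s)/2}}{\|K_z\|^s\|K_w\|^r}d\lambda(w)<\infty$, and if $\kappa=0$ this holds for all $r=s>0$; (A.7) $\|K_z\|\to\infty$ as $d(z,0)\to\infty$. A strong Bergman-type space is one in which $\simeq$ can be replaced by $=$ in (A.2), (A.4), (A.5), i.e. $d(u,v)=d(\varphi_z(u),\varphi_z(v))$, $\lambda(E)=\lambda(\varphi_z(E))$, $|\langle k_z,k_w\rangle|=1/\|K_{\varphi_z(w)}\|$. $P$ is the orthogonal projection of $L^2(\Omega;d\sigma)$ onto $\mathcal{B}(\Omega)$, $Pf(z)=\int_\Omega\langle K_w,K_z\rangle f(w)d\sigma(w)$; $T_u:=PM_u$, where $M_uf=uf$; $U_zf(w):=f(\varphi_z(w))k_z(w)$. *)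

theory Defs
  imports "HOL-Analysis.Analysis"
begin

text \<open>Points of C^n are modelled as complex ^ 'n (n = CARD('n)).\<close>

definition holo_fun :: "(complex ^ 'n \<Rightarrow> complex) \<Rightarrow> (complex ^ 'n) set \<Rightarrow> bool" where
  "holo_fun f S \<longleftrightarrow> (\<forall>z\<in>S. \<exists>L. (f has_derivative L) (at z) \<and> (\<forall>x. L (\<i> *s x) = \<i> * L x))"

definition holo_map :: "(complex ^ 'n \<Rightarrow> complex ^ 'm) \<Rightarrow> (complex ^ 'n) set \<Rightarrow> bool" where
  "holo_map F S \<longleftrightarrow> (\<forall>i. holo_fun (\<lambda>x. F x $ i) S)"

definition L2 :: "'a measure \<Rightarrow> ('a \<Rightarrow> complex) \<Rightarrow> bool" where
  "L2 M f \<longleftrightarrow> f \<in> borel_measurable M \<and> integrable M (\<lambda>x. (cmod (f x))\<^sup>2)"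

definition L2_norm :: "'a measure \<Rightarrow> ('a \<Rightarrow> complex) \<Rightarrow> real" where
  "L2_norm M f = sqrt (\<integral>x. (cmod (f x))\<^sup>2 \<partial>M)"

definition L2_inner :: "'a measure \<Rightarrow> ('a \<Rightarrow> complex) \<Rightarrow> ('a \<Rightarrow> complex) \<Rightarrow> complex" where
  "L2_inner M f g = (\<integral>x. f x * cnj (g x) \<partial>M)"

definition bergman_space :: "(complex ^ 'n) set \<Rightarrow> (complex ^ 'n) measure \<Rightarrow> (complex ^ 'n \<Rightarrow> complex) set" where
  "bergman_space \<Omega> \<sigma> = {f. holo_fun f \<Omega> \<and> L2 \<sigma> f}"

definition Knorm :: "(complex ^ 'n) measure \<Rightarrow> (complex ^ 'n \<Rightarrow> complex ^ 'n \<Rightarrow> complex) \<Rightarrow> complex ^ 'n \<Rightarrow> real" where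
  "Knorm \<sigma> K z = L2_norm \<sigma> (K z)"

definition kn :: "(complex ^ 'n) measure \<Rightarrow> (complex ^ 'n \<Rightarrow> complex ^ 'n \<Rightarrow> complex) \<Rightarrow> complex ^ 'n \<Rightarrow> complex ^ 'n \<Rightarrow> complex" where
  "kn \<sigma> K z w = K z w / complex_of_real (Knorm \<sigma> K z)"

definition blambda :: "(complex ^ 'n) measure \<Rightarrow> (complex ^ 'n \<Rightarrow> complex ^ 'n \<Rightarrow> complex) \<Rightarrow> (complex ^ 'n) measure" where
  "blambda \<sigma> K = density \<sigma> (\<lambda>z. ennreal ((Knorm \<sigma> K z)\<^sup>2))"

definition Pop :: "(complex ^ 'n) measure \<Rightarrow> (complex ^ 'n \<Rightarrow> complex ^ 'n \<Rightarrow> complex) \<Rightarrow> (complex ^ 'n \<Rightarrow> complex) \<Rightarrow> complex ^ 'n \<Rightarrow> complex" where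
  "Pop \<sigma> K f z = (\<integral>w. L2_inner \<sigma> (K w) (K z) * f w \<partial>\<sigma>)"

definition Top :: "(complex ^ 'n) measure \<Rightarrow> (complex ^ 'n \<Rightarrow> complex ^ 'n \<Rightarrow> complex) \<Rightarrow> (complex ^ 'n \<Rightarrow> complex) \<Rightarrow> (complex ^ 'n \<Rightarrow> complex) \<Rightarrow> complex ^ 'n \<Rightarrow> complex" where
  "Top \<sigma> K u f = Pop \<sigma> K (\<lambda>w. u w * f w)"

definition Uop :: "(complex ^ 'n) measure \<Rightarrow> (complex ^ 'n \<Rightarrow> complex ^ 'n \<Rightarrow> complex) \<Rightarrow> (complex ^ 'n \<Rightarrow> complex ^ 'n \<Rightarrow> complex ^ 'n) \<Rightarrow> complex ^ 'n \<Rightarrow> (complex ^ 'n \<Rightarrow> complex) \<Rightarrow> complex ^ 'n \<Rightarrow> complex" where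
  "Uop \<sigma> K \<phi> z f w = f (\<phi> z w) * kn \<sigma> K z w"

definition RF_bound :: "(complex ^ 'n) set \<Rightarrow> (complex ^ 'n) measure \<Rightarrow> (complex ^ 'n \<Rightarrow> complex ^ 'n \<Rightarrow> complex) \<Rightarrow> real \<Rightarrow> real \<Rightarrow> bool" where
  "RF_bound \<Omega> \<sigma> K r s \<longleftrightarrow> (\<exists>M::real. \<forall>z\<in>\<Omega>.
     (\<integral>\<^sup>+ w. ennreal (cmod (L2_inner \<sigma> (K z) (K w)) powr ((r + s) / 2)
        / (Knorm \<sigma> K z powr s * Knorm \<sigma> K w powr r)) \<partial>(blambda \<sigma> K)) \<le> ennreal M)"

text \<open>Strong Bergman-type space: (A.1)--(A.7) with equalities in (A.2), (A.4), (A.5).\<close>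
definition strong_bergman_type ::
  "(complex ^ 'n) set \<Rightarrow> (complex ^ 'n) measure \<Rightarrow> (complex ^ 'n \<Rightarrow> complex ^ 'n \<Rightarrow> real)
   \<Rightarrow> (complex ^ 'n \<Rightarrow> complex ^ 'n \<Rightarrow> complex ^ 'n) \<Rightarrow> (complex ^ 'n \<Rightarrow> complex ^ 'n \<Rightarrow> complex) \<Rightarrow> bool" where
  "strong_bergman_type \<Omega> \<sigma> d \<phi> K \<longleftrightarrow>
    \<comment> \<open>domain containing 0\<close>
    open \<Omega> \<and> connected \<Omega> \<and> 0 \<in> \<Omega> \<and>
    \<comment> \<open>(A.1) involutive biholomorphic automorphisms\<close>
    (\<forall>z\<in>\<Omega>. \<phi> z ` \<Omega> \<subseteq> \<Omega> \<and> holo_map (\<phi> z) \<Omega> \<and> (\<forall>x\<in>\<Omega>. \<phi> z (\<phi> z x) = x) \<and> \<phi> z 0 = z) \<and>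
    \<comment> \<open>(A.2) metric, invariant, separable, closed balls compact\<close>
    Metric_space \<Omega> d \<and>
    (\<forall>z\<in>\<Omega>. \<forall>u\<in>\<Omega>. \<forall>v\<in>\<Omega>. d (\<phi> z u) (\<phi> z v) = d u v) \<and>
    separable_space (Metric_space.mtopology \<Omega> d) \<and>
    (\<forall>z\<in>\<Omega>. \<forall>r. compactin (Metric_space.mtopology \<Omega> d) (Metric_space.mcball \<Omega> d z r)) \<and>
    \<comment> \<open>(A.3) finite Borel measure on Omega, reproducing kernel Hilbert space\<close>
    sets \<sigma> = sets (restrict_space borel \<Omega>) \<and> finite_measure \<sigma> \<and>
    (\<forall>F. (\<forall>n. F n \<in> bergman_space \<Omega> \<sigma>) \<and>
         (\<forall>e>0. \<exists>N. \<forall>m\<ge>N. \<forall>n\<ge>N. L2_norm \<sigma> (\<lambda>x. F m x - F n x) < e) \<longrightarrow>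
         (\<exists>f\<in>bergman_space \<Omega> \<sigma>. (\<lambda>n. L2_norm \<sigma> (\<lambda>x. F n x - f x)) \<longlonglongrightarrow> 0)) \<and>
    (\<forall>z\<in>\<Omega>. K z \<in> bergman_space \<Omega> \<sigma>) \<and>
    (\<forall>f\<in>bergman_space \<Omega> \<sigma>. \<forall>z\<in>\<Omega>. f z = L2_inner \<sigma> f (K z)) \<and>
    continuous_map (Metric_space.mtopology \<Omega> d) euclideanreal (Knorm \<sigma> K) \<and>
    \<comment> \<open>(A.4) invariance and doubling of lambda\<close>
    (\<forall>z\<in>\<Omega>. \<forall>E\<in>sets \<sigma>. emeasure (blambda \<sigma> K) (\<phi> z ` E) = emeasure (blambda \<sigma> K) E) \<and>
    (\<exists>C::real. \<forall>z\<in>\<Omega>. \<forall>r>0.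
        emeasure (blambda \<sigma> K) (Metric_space.mball \<Omega> d z (2 * r))
          \<le> ennreal C * emeasure (blambda \<sigma> K) (Metric_space.mball \<Omega> d z r)) \<and>
    \<comment> \<open>(A.5)\<close>
    (\<forall>z\<in>\<Omega>. \<forall>w\<in>\<Omega>. cmod (L2_inner \<sigma> (kn \<sigma> K z) (kn \<sigma> K w)) = 1 / Knorm \<sigma> K (\<phi> z w)) \<and>
    \<comment> \<open>(A.6) Rudin--Forelli estimates\<close>
    (\<exists>\<kappa>::real. 0 \<le> \<kappa> \<and> \<kappa> < 2 \<and>
       (\<kappa> > 0 \<longrightarrow> (\<forall>r s. r > \<kappa> \<and> \<kappa> > s \<and> s > 0 \<longrightarrow> RF_bound \<Omega> \<sigma> K r s)) \<and>
       (\<kappa> = 0 \<longrightarrow> (\<forall>r>0. RF_bound \<Omega> \<sigma> K r r))) \<and>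
    \<comment> \<open>(A.7)\<close>
    (\<forall>M::real. \<exists>R::real. \<forall>z\<in>\<Omega>. d z 0 > R \<longrightarrow> Knorm \<sigma> K z > M)"

end

theory Submission
  imports Defs
begin



lemma has_derivative_vec:
  fixes F :: "'a::euclidean_space \<Rightarrow> 'b::real_normed_vector ^ 'n"
  assumes d: "\<And>i. ((\<lambda>x. F x $ i) has_derivative L i) (at a)"
  shows "(F has_derivative (\<lambda>h. \<chi> i. L i h)) (at a)"
proof -
  have bl: "\<And>i. bounded_linear (L i)" using d has_derivative_bounded_linear by blast
  have "linear (\<lambda>h. \<chi> i. L i h)"
  proof (rule linearI)
    fix x y show "(\<chi> i. L i (x + y)) = (\<chi> i. L i x) + (\<chi> i. L i y)"
      by (simp add: vec_eq_iff linear_simps(1)[OF bl])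
  next
    fix c x show "(\<chi> i. L i (c *\<^sub>R x)) = c *\<^sub>R (\<chi> i. L i x)"
      by (simp add: vec_eq_iff linear_simps(5)[OF bl])
  qed
  hence b: "bounded_linear (\<lambda>h. \<chi> i. L i h)" by (simp add: linear_conv_bounded_linear)
  have t: "\<And>i. ((\<lambda>y. (1 / norm(y - a)) *\<^sub>R (F y $ i - (F a $ i + L i (y - a)))) \<longlongrightarrow> 0) (at a)"
    using d by (simp add: has_derivative_within[of _ _ _ UNIV])
  have "((\<lambda>y. \<chi> i. (1 / norm(y - a)) *\<^sub>R (F y $ i - (F a $ i + L i (y - a)))) \<longlongrightarrow> (\<chi> i. 0)) (at a)"
    by (rule tendsto_vec_lambda) (rule t)
  moreover have "(\<lambda>y. \<chi> i. (1 / norm(y - a)) *\<^sub>R (F y $ i - (F a $ i + L i (y - a))))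
      = (\<lambda>y. (1 / norm(y - a)) *\<^sub>R (F y - (F a + (\<chi> i. L i (y - a)))))"
    by (auto simp: vec_eq_iff)
  moreover have "(\<chi> i. 0) = (0 :: 'b ^ 'n)" by (simp add: vec_eq_iff)
  ultimately show ?thesis using b by (simp add: has_derivative_within[of _ _ _ UNIV])
qed

lemma meas_cnj[measurable]:
  fixes f :: "'a \<Rightarrow> complex"
  assumes "f \<in> borel_measurable M" shows "(\<lambda>x. cnj (f x)) \<in> borel_measurable M"
proof -
  have "cnj \<in> borel_measurable borel"
    by (rule borel_measurable_continuous_onI) (intro continuous_intros)
  from measurable_compose[OF assms this] show ?thesis by simp
qed

lemma holo_fun_const: "holo_fun (\<lambda>_. c) S"
  unfolding holo_fun_def by (intro ballI exI[of _ "\<lambda>_. 0"]) auto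

lemma holo_fun_mult:
  assumes "holo_fun f S" "holo_fun g S" shows "holo_fun (\<lambda>x. f x * g x) S"
  unfolding holo_fun_def
proof
  fix z assume z: "z \<in> S"
  obtain F where F: "(f has_derivative F) (at z)" "\<forall>x. F (\<i> *s x) = \<i> * F x" using assms(1) z unfolding holo_fun_def by blast
  obtain G where G: "(g has_derivative G) (at z)" "\<forall>x. G (\<i> *s x) = \<i> * G x" using assms(2) z unfolding holo_fun_def by blast
  show "\<exists>L. ((\<lambda>x. f x * g x) has_derivative L) (at z) \<and> (\<forall>x. L (\<i> *s x) = \<i> * L x)"
    by (intro exI[of _ "\<lambda>h. f z * G h + F h * g z"] conjI has_derivative_mult F G)
       (simp add: F G algebra_simps)
qed

lemma holo_fun_divide:
  assumes "holo_fun f S" "holo_fun g S" "\<forall>x\<in>S. g x \<noteq> 0" shows "holo_fun (\<lambda>x. f x / g x) S"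
  unfolding holo_fun_def
proof
  fix z assume z: "z \<in> S"
  obtain F where F: "(f has_derivative F) (at z)" "\<forall>x. F (\<i> *s x) = \<i> * F x" using assms(1) z unfolding holo_fun_def by blast
  obtain G where G: "(g has_derivative G) (at z)" "\<forall>x. G (\<i> *s x) = \<i> * G x" using assms(2) z unfolding holo_fun_def by blast
  let ?L = "\<lambda>h. - f z * (inverse (g z) * G h * inverse (g z)) + F h / g z"
  have "?L (\<i> *s x) = \<i> * ?L x" for x
  proof -
    have "?L (\<i> *s x) = - f z * (inverse (g z) * (\<i> * G x) * inverse (g z)) + (\<i> * F x) / g z"
      using F(2) G(2) by simp
    also have "\<dots> = \<i> * ?L x" by (simp add: ring_distribs mult.left_commute)
    finally show ?thesis .
  qed
  moreover have "((\<lambda>x. f x / g x) has_derivative ?L) (at z)"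
    using has_derivative_divide[OF F(1) G(1)] assms(3) z by blast
  ultimately show "\<exists>L. ((\<lambda>x. f x / g x) has_derivative L) (at z) \<and> (\<forall>x. L (\<i> *s x) = \<i> * L x)"
    by blast
qed

lemma holo_fun_compose:
  fixes F :: "complex ^ 'n \<Rightarrow> complex ^ 'm"
  assumes f: "holo_fun f T" and F: "holo_map F S" and ST: "F ` S \<subseteq> T"
  shows "holo_fun (\<lambda>x. f (F x)) S"
  unfolding holo_fun_def
proof
  fix z assume z: "z \<in> S"
  have "\<forall>i. \<exists>L. ((\<lambda>x. F x $ i) has_derivative L) (at z) \<and> (\<forall>x. L (\<i> *s x) = \<i> * L x)"
    using F z unfolding holo_map_def holo_fun_def by blast
  then obtain L where L: "\<And>i. ((\<lambda>x. F x $ i) has_derivative L i) (at z)" "\<And>i x. L i (\<i> *s x) = \<i> * L i x"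
    by metis
  have dF: "(F has_derivative (\<lambda>h. \<chi> i. L i h)) (at z)" by (rule has_derivative_vec) (rule L)
  obtain G where G: "(f has_derivative G) (at (F z))" "\<forall>x. G (\<i> *s x) = \<i> * G x"
    using f ST z unfolding holo_fun_def by blast
  have "(\<chi> i. L i (\<i> *s x)) = \<i> *s (\<chi> i. L i x)" for x by (simp add: vec_eq_iff L(2))
  then show "\<exists>L. ((\<lambda>x. f (F x)) has_derivative L) (at z) \<and> (\<forall>x. L (\<i> *s x) = \<i> * L x)"
    by (intro exI[of _ "\<lambda>x. G (\<chi> i. L i x)"] conjI has_derivative_compose[OF dF G(1)]) (simp add: G(2))
qed

lemma holo_fun_continuous_on: "holo_fun f S \<Longrightarrow> continuous_on S f"
  unfolding holo_fun_def
  by (meson continuous_at_imp_continuous_on has_derivative_continuous)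

lemma holo_map_continuous_on:
  assumes "holo_map F S" shows "continuous_on S F"
proof -
  have "continuous_on S (\<lambda>x. \<chi> i. F x $ i)"
    by (intro continuous_on_vec_lambda holo_fun_continuous_on) (use assms in \<open>auto simp: holo_map_def\<close>)
  thus ?thesis by simp
qed




locale SB =
  fixes \<Omega> :: "(complex ^ 'n) set" and \<sigma> :: "(complex ^ 'n) measure"
    and d :: "complex ^ 'n \<Rightarrow> complex ^ 'n \<Rightarrow> real"
    and \<phi> :: "complex ^ 'n \<Rightarrow> complex ^ 'n \<Rightarrow> complex ^ 'n"
    and K :: "complex ^ 'n \<Rightarrow> complex ^ 'n \<Rightarrow> complex"
  assumes sb: "strong_bergman_type \<Omega> \<sigma> d \<phi> K"
begin

abbreviation "Kn \<equiv> Knorm \<sigma> K"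
abbreviation "k \<equiv> kn \<sigma> K"
abbreviation "B \<equiv> bergman_space \<Omega> \<sigma>"

lemma openO: "open \<Omega>" using sb[unfolded strong_bergman_type_def, THEN conjunct1] .
lemma connO: "connected \<Omega>" using sb[unfolded strong_bergman_type_def, THEN conjunct2, THEN conjunct1] .
lemma zeroO: "0 \<in> \<Omega>" using sb[unfolded strong_bergman_type_def, THEN conjunct2, THEN conjunct2, THEN conjunct1] .
lemma A1: "\<forall>z\<in>\<Omega>. \<phi> z ` \<Omega> \<subseteq> \<Omega> \<and> holo_map (\<phi> z) \<Omega> \<and> (\<forall>x\<in>\<Omega>. \<phi> z (\<phi> z x) = x) \<and> \<phi> z 0 = z" using sb[unfolded strong_bergman_type_def, THEN conjunct2, THEN conjunct2, THEN conjunct2, THEN conjunct1] .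
lemma phi_in: "z \<in> \<Omega> \<Longrightarrow> x \<in> \<Omega> \<Longrightarrow> \<phi> z x \<in> \<Omega>" using A1 by blast
lemma phi_holo: "z \<in> \<Omega> \<Longrightarrow> holo_map (\<phi> z) \<Omega>" using A1 by blast
lemma phi_inv: "z \<in> \<Omega> \<Longrightarrow> x \<in> \<Omega> \<Longrightarrow> \<phi> z (\<phi> z x) = x" using A1 by blast
lemma phi0: "z \<in> \<Omega> \<Longrightarrow> \<phi> z 0 = z" using A1 by blast
lemma sets_sigma: "sets \<sigma> = sets (restrict_space borel \<Omega>)" using sb[unfolded strong_bergman_type_def, THEN conjunct2, THEN conjunct2, THEN conjunct2, THEN conjunct2, THEN conjunct2, THEN conjunct2, THEN conjunct2, THEN conjunct2, THEN conjunct1] .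
lemma fin: "finite_measure \<sigma>" using sb[unfolded strong_bergman_type_def, THEN conjunct2, THEN conjunct2, THEN conjunct2, THEN conjunct2, THEN conjunct2, THEN conjunct2, THEN conjunct2, THEN conjunct2, THEN conjunct2, THEN conjunct1] .
lemma Kin': "\<forall>z\<in>\<Omega>. K z \<in> B" using sb[unfolded strong_bergman_type_def, THEN conjunct2, THEN conjunct2, THEN conjunct2, THEN conjunct2, THEN conjunct2, THEN conjunct2, THEN conjunct2, THEN conjunct2, THEN conjunct2, THEN conjunct2, THEN conjunct2, THEN conjunct1] .
lemma Kin: "z \<in> \<Omega> \<Longrightarrow> K z \<in> B" using Kin' by blast
lemma repro': "\<forall>f\<in>B. \<forall>z\<in>\<Omega>. f z = L2_inner \<sigma> f (K z)" using sb[unfolded strong_bergman_type_def, THEN conjunct2, THEN conjunct2, THEN conjunct2, THEN conjunct2, THEN conjunct2, THEN conjunct2, THEN conjunct2, THEN conjunct2, THEN conjunct2, THEN conjunct2, THEN conjunct2, THEN conjunct2, THEN conjunct1] .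
lemma repro: "f \<in> B \<Longrightarrow> z \<in> \<Omega> \<Longrightarrow> f z = L2_inner \<sigma> f (K z)" using repro' by blast
lemma inv': "\<forall>z\<in>\<Omega>. \<forall>E\<in>sets \<sigma>. emeasure (blambda \<sigma> K) (\<phi> z ` E) = emeasure (blambda \<sigma> K) E" using sb[unfolded strong_bergman_type_def, THEN conjunct2, THEN conjunct2, THEN conjunct2, THEN conjunct2, THEN conjunct2, THEN conjunct2, THEN conjunct2, THEN conjunct2, THEN conjunct2, THEN conjunct2, THEN conjunct2, THEN conjunct2, THEN conjunct2, THEN conjunct2, THEN conjunct1] .
lemma inv: "z \<in> \<Omega> \<Longrightarrow> E \<in> sets \<sigma> \<Longrightarrow> emeasure (blambda \<sigma> K) (\<phi> z ` E) = emeasure (blambda \<sigma> K) E" using inv' by blast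
lemma A5': "\<forall>z\<in>\<Omega>. \<forall>w\<in>\<Omega>. cmod (L2_inner \<sigma> (k z) (k w)) = 1 / Kn (\<phi> z w)" using sb[unfolded strong_bergman_type_def, THEN conjunct2, THEN conjunct2, THEN conjunct2, THEN conjunct2, THEN conjunct2, THEN conjunct2, THEN conjunct2, THEN conjunct2, THEN conjunct2, THEN conjunct2, THEN conjunct2, THEN conjunct2, THEN conjunct2, THEN conjunct2, THEN conjunct2, THEN conjunct2, THEN conjunct1] .
lemma A5: "z \<in> \<Omega> \<Longrightarrow> w \<in> \<Omega> \<Longrightarrow> cmod (L2_inner \<sigma> (k z) (k w)) = 1 / Kn (\<phi> z w)" using A5' by blast

lemma space_sigma: "space \<sigma> = \<Omega>"
  using sets_eq_imp_space_eq[OF sets_sigma] by (simp add: space_restrict_space)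

lemma meas_cont: "continuous_on \<Omega> f \<Longrightarrow> f \<in> borel_measurable \<sigma>"
  using measurable_cong_sets[OF sets_sigma refl] borel_measurable_continuous_on_restrict by blast

lemma holo_meas: "holo_fun f \<Omega> \<Longrightarrow> f \<in> borel_measurable \<sigma>"
  by (intro meas_cont holo_fun_continuous_on)

lemma phi_cont: "z \<in> \<Omega> \<Longrightarrow> continuous_on \<Omega> (\<phi> z)"
  by (intro holo_map_continuous_on phi_holo)

lemma phi_meas: assumes "z \<in> \<Omega>" shows "\<phi> z \<in> measurable \<sigma> \<sigma>"
proof -
  have "\<phi> z \<in> measurable \<sigma> (restrict_space borel \<Omega>)"
    by (rule measurable_restrict_space2) (use assms phi_in phi_cont meas_cont space_sigma in auto)
  thus ?thesis using measurable_cong_sets[OF refl sets_sigma] by blast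
qed

lemma B_L2: "f \<in> B \<Longrightarrow> L2 \<sigma> f" and B_holo: "f \<in> B \<Longrightarrow> holo_fun f \<Omega>"
  by (auto simp: bergman_space_def)

lemma L2_meas: "L2 \<sigma> f \<Longrightarrow> f \<in> borel_measurable \<sigma>"
  and L2_int: "L2 \<sigma> f \<Longrightarrow> integrable \<sigma> (\<lambda>x. (cmod (f x))\<^sup>2)"
  by (auto simp: L2_def)

lemma L2_prod_int:
  assumes "L2 \<sigma> f" "L2 \<sigma> g" shows "integrable \<sigma> (\<lambda>x. f x * cnj (g x))"
proof (rule Bochner_Integration.integrable_bound)
  show "integrable \<sigma> (\<lambda>x. (cmod (f x))\<^sup>2 + (cmod (g x))\<^sup>2)"
    using assms by (intro Bochner_Integration.integrable_add L2_int)
  have [measurable]: "f \<in> borel_measurable \<sigma>" "g \<in> borel_measurable \<sigma>" using assms L2_meas by auto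
  show "(\<lambda>x. f x * cnj (g x)) \<in> borel_measurable \<sigma>" by measurable
  show "AE x in \<sigma>. norm (f x * cnj (g x)) \<le> norm ((cmod (f x))\<^sup>2 + (cmod (g x))\<^sup>2)"
  proof (rule AE_I2)
    fix x
    have "0 \<le> (cmod (f x) - cmod (g x))\<^sup>2" by simp
    hence "2 * (cmod (f x) * cmod (g x)) \<le> (cmod (f x))\<^sup>2 + (cmod (g x))\<^sup>2"
      by (simp add: power2_diff)
    moreover have "0 \<le> cmod (f x) * cmod (g x)" by simp
    ultimately have "cmod (f x) * cmod (g x) \<le> (cmod (f x))\<^sup>2 + (cmod (g x))\<^sup>2"
      by linarith
    thus "norm (f x * cnj (g x)) \<le> norm ((cmod (f x))\<^sup>2 + (cmod (g x))\<^sup>2)"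
      by (simp add: norm_mult)
  qed
qed

lemma L2_inner_cnj: "L2_inner \<sigma> f g = cnj (L2_inner \<sigma> g f)"
proof -
  have "cnj (\<integral>x. g x * cnj (f x) \<partial>\<sigma>) = (\<integral>x. cnj (g x * cnj (f x)) \<partial>\<sigma>)"
    by (rule Bochner_Integration.integral_cnj[symmetric])
  thus ?thesis unfolding L2_inner_def by (simp add: mult.commute)
qed

lemma KK: "z \<in> \<Omega> \<Longrightarrow> w \<in> \<Omega> \<Longrightarrow> K z w = L2_inner \<sigma> (K z) (K w)"
  using repro Kin by blast

lemma Ksym: "z \<in> \<Omega> \<Longrightarrow> w \<in> \<Omega> \<Longrightarrow> K z w = cnj (K w z)"
  using KK L2_inner_cnj by metis

lemma L2_inner_self: "L2_inner \<sigma> f f = of_real (\<integral>x. (cmod (f x))\<^sup>2 \<partial>\<sigma>)"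
proof -
  have "\<And>x. f x * cnj (f x) = complex_of_real ((cmod (f x))\<^sup>2)" by (rule complex_norm_square[symmetric])
  thus ?thesis unfolding L2_inner_def by (simp only: integral_complex_of_real)
qed

lemma Kn_sq: "(Kn z)\<^sup>2 = (\<integral>x. (cmod (K z x))\<^sup>2 \<partial>\<sigma>)"
  unfolding Knorm_def L2_norm_def by (simp add: integral_nonneg_AE)

lemma Kzz: "z \<in> \<Omega> \<Longrightarrow> K z z = of_real ((Kn z)\<^sup>2)"
  using KK[of z z] L2_inner_self Kn_sq by simp

lemma one_in: "(\<lambda>_. 1) \<in> B"
  unfolding bergman_space_def L2_def
  using holo_fun_const finite_measure.integrable_const[OF fin] by auto

lemma Kn_pos: assumes z: "z \<in> \<Omega>" shows "Kn z > 0"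
proof (rule ccontr)
  assume A: "\<not> Kn z > 0"
  have nn: "0 \<le> (\<integral>x. (cmod (K z x))\<^sup>2 \<partial>\<sigma>)" by (rule Bochner_Integration.integral_nonneg) simp
  have "Kn z = sqrt (\<integral>x. (cmod (K z x))\<^sup>2 \<partial>\<sigma>)" unfolding Knorm_def L2_norm_def by simp
  with A nn have I0: "(\<integral>x. (cmod (K z x))\<^sup>2 \<partial>\<sigma>) = 0" by simp
  have int: "integrable \<sigma> (\<lambda>x. (cmod (K z x))\<^sup>2)" using Kin[OF z] B_L2 L2_int by blast
  have "AE x in \<sigma>. (cmod (K z x))\<^sup>2 = 0"
    using iffD1[OF integral_nonneg_eq_0_iff_AE[OF int] I0] by simp
  hence "AE x in \<sigma>. 1 * cnj (K z x) = 0" by (rule AE_mp) (intro AE_I2, simp)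
  hence "(\<integral>x. 1 * cnj (K z x) \<partial>\<sigma>) = 0" by (rule integral_eq_zero_AE)
  hence "L2_inner \<sigma> (\<lambda>_. 1) (K z) = 0" unfolding L2_inner_def by simp
  moreover have "L2_inner \<sigma> (\<lambda>_. 1) (K z) = 1" using repro[OF one_in z] by simp
  ultimately show False by simp
qed

lemma L2_inner_kn: "L2_inner \<sigma> (k z) (k w) = L2_inner \<sigma> (K z) (K w) / of_real (Kn z * Kn w)"
  unfolding L2_inner_def kn_def by (simp add: field_simps)

lemma kn_norm: assumes "z \<in> \<Omega>" "x \<in> \<Omega>" shows "cmod (k z x) = Kn x / Kn (\<phi> z x)"
proof -
  have p: "Kn z > 0" "Kn x > 0" "Kn (\<phi> z x) > 0" using Kn_pos assms phi_in by auto
  have "1 / Kn (\<phi> z x) = cmod (K z x) / (Kn z * Kn x)"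
    using A5[OF assms] L2_inner_kn[of z x] KK[OF assms] p by (simp add: norm_divide norm_mult)
  moreover have "cmod (k z x) = cmod (K z x) / Kn z" using p by (simp add: kn_def norm_divide)
  ultimately have "Kn z * Kn x = Kn z * (cmod (k z x) * Kn (\<phi> z x))" using p
    by (simp add: field_simps)
  hence "Kn x = cmod (k z x) * Kn (\<phi> z x)" using p by simp
  thus ?thesis using p by (simp add: field_simps)
qed

lemma kn_nz: "z \<in> \<Omega> \<Longrightarrow> x \<in> \<Omega> \<Longrightarrow> k z x \<noteq> 0"
  using kn_norm[of z x] Kn_pos phi_in by force

lemma phi_self: "z \<in> \<Omega> \<Longrightarrow> \<phi> z z = 0"
  using phi_inv[of z 0] phi0 zeroO by auto

lemma Kn0: "Kn 0 = 1"
proof -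
  have "cmod (k 0 0) = Kn 0 / Kn 0" using kn_norm[OF zeroO zeroO] phi_self[OF zeroO] by simp
  moreover have "k 0 0 = of_real (Kn 0)" using Kzz[OF zeroO] Kn_pos[OF zeroO] 
    by (simp add: kn_def power2_eq_square)
  ultimately show ?thesis using Kn_pos[OF zeroO] by simp
qed

end



context SB begin

lemma K_meas: "z \<in> \<Omega> \<Longrightarrow> K z \<in> borel_measurable \<sigma>"
  using Kin B_L2 L2_meas by blast

lemma K_cont: "z \<in> \<Omega> \<Longrightarrow> continuous_on \<Omega> (K z)"
  using Kin B_holo holo_fun_continuous_on by blast

lemma Kdiag_meas: "(\<lambda>x. K x x) \<in> borel_measurable \<sigma>"
proof -
  obtain D :: "(complex ^ 'n) set" where D: "countable D" "\<And>U. open U \<Longrightarrow> U \<noteq> {} \<Longrightarrow> \<exists>y \<in> D. y \<in> U"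
    using countable_dense_exists by blast
  define D' where "D' = D \<inter> \<Omega>"
  have near: "\<exists>y\<in>D'. dist y x < r" if "x \<in> \<Omega>" "r > 0" for x r
  proof -
    have "x \<in> ball x r \<inter> \<Omega>" using that by simp
    hence "ball x r \<inter> \<Omega> \<noteq> {}" by blast
    moreover have "open (ball x r \<inter> \<Omega>)" using openO by (simp add: open_Int)
    ultimately
    obtain y where "y \<in> D" "y \<in> ball x r \<inter> \<Omega>" using D(2) by blast
    thus ?thesis unfolding D'_def by (auto simp: dist_commute)
  qed
  have cD': "countable D'" using D(1) unfolding D'_def by simp
  have neD': "D' \<noteq> {}" using near[OF zeroO, of 1] by auto
  define e where "e = from_nat_into D'"
  have rng: "range e = D'" unfolding e_def using range_from_nat_into[OF neD' cD'] .
  have eO: "e i \<in> \<Omega>" for i using rng D'_def by blast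
  have ex: "\<exists>i. dist (e i) x < 1 / Suc n" if xO: "x \<in> \<Omega>" for x n
  proof -
    have "\<exists>y\<in>D'. dist y x < 1 / Suc n" using near[OF xO, of "1 / Suc n"] by simp
    then obtain y where "y \<in> D'" "dist y x < 1 / Suc n" by blast
    thus ?thesis using rng by (metis imageE)
  qed
  define L where "L n x = (LEAST i. dist (e i) x < 1 / Suc n)" for n x
  have Lmeas: "L n \<in> measurable \<sigma> (count_space UNIV)" for n
  proof -
    have [measurable]: "(\<lambda>x. dist (e i) x) \<in> borel_measurable \<sigma>" for i
      by (intro meas_cont continuous_intros)
    show ?thesis unfolding L_def by measurable
  qed
  have fmeas: "(\<lambda>x. K (e (L n x)) x) \<in> borel_measurable \<sigma>" for n
    by (rule measurable_compose_countable[OF _ Lmeas]) (rule K_meas[OF eO])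
  have lim: "(\<lambda>n. K (e (L n x)) x) \<longlonglongrightarrow> K x x" if x: "x \<in> \<Omega>" for x
  proof -
    have dL: "dist (e (L n x)) x < 1 / Suc n" for n
      unfolding L_def by (rule LeastI_ex) (rule ex[OF x])
    have conv: "(\<lambda>n. e (L n x)) \<longlonglongrightarrow> x"
    proof (rule tendsto_sandwich[THEN tendsto_dist_iff[THEN iffD2]])
      show "\<forall>\<^sub>F n in sequentially. 0 \<le> dist (e (L n x)) x" by simp
      show "\<forall>\<^sub>F n in sequentially. dist (e (L n x)) x \<le> 1 / Suc n" using dL by (simp add: less_imp_le)
      show "(\<lambda>n. 0::real) \<longlonglongrightarrow> 0" by simp
      show "(\<lambda>n. 1 / real (Suc n)) \<longlonglongrightarrow> 0" by (rule LIMSEQ_Suc[OF lim_const_over_n])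
    qed
    have "(\<lambda>n. K x (e (L n x))) \<longlonglongrightarrow> K x x"
      by (rule continuous_on_tendsto_compose[OF K_cont[OF x] conv x]) (simp add: eO)
    hence "(\<lambda>n. cnj (K x (e (L n x)))) \<longlonglongrightarrow> cnj (K x x)" by (rule tendsto_cnj)
    moreover have "cnj (K x (e (L n x))) = K (e (L n x)) x" for n using Ksym[OF eO x] by simp
    moreover have "cnj (K x x) = K x x" using Kzz[OF x] by simp
    ultimately show ?thesis by simp
  qed
  show ?thesis
    by (rule borel_measurable_LIMSEQ_metric[OF fmeas]) (use lim space_sigma in auto)
qed

lemma Kn_meas[measurable]: "Kn \<in> borel_measurable \<sigma>"
proof -
  have "(\<lambda>x. sqrt (Re (K x x))) \<in> borel_measurable \<sigma>" using Kdiag_meas by measurable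
  moreover have "x \<in> space \<sigma> \<Longrightarrow> sqrt (Re (K x x)) = Kn x" for x
    using Kzz[of x] Kn_pos[of x] space_sigma by simp
  ultimately show ?thesis using measurable_cong by (smt (verit) measurable_cong)
qed

end



context SB begin

abbreviation "lam \<equiv> blambda \<sigma> K"

lemma sets_lam: "sets lam = sets \<sigma>" and space_lam: "space lam = \<Omega>"
  unfolding blambda_def by (simp_all add: space_sigma)

lemma phi_meas_lam: "z \<in> \<Omega> \<Longrightarrow> \<phi> z \<in> measurable lam lam"
  using phi_meas measurable_cong_sets[OF sets_lam sets_lam] by blast

lemma distr_lam: assumes z: "z \<in> \<Omega>" shows "distr lam lam (\<phi> z) = lam"
proof (rule measure_eqI)
  show "sets (distr lam lam (\<phi> z)) = sets lam" by simp
  fix A assume "A \<in> sets (distr lam lam (\<phi> z))"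
  hence A: "A \<in> sets \<sigma>" using sets_lam by simp
  hence AO: "A \<subseteq> \<Omega>" using sets.sets_into_space space_sigma by blast
  have "\<phi> z -` A \<inter> space lam = \<phi> z ` A"
  proof
    show "\<phi> z -` A \<inter> space lam \<subseteq> \<phi> z ` A"
    proof
      fix x assume "x \<in> \<phi> z -` A \<inter> space lam"
      hence "\<phi> z x \<in> A" "x \<in> \<Omega>" using space_lam by auto
      thus "x \<in> \<phi> z ` A" using phi_inv[OF z] by (metis image_eqI)
    qed
    show "\<phi> z ` A \<subseteq> \<phi> z -` A \<inter> space lam"
      using AO phi_inv[OF z] phi_in[OF z] space_lam by auto
  qed
  thus "emeasure (distr lam lam (\<phi> z)) A = emeasure lam A"
    using emeasure_distr[OF phi_meas_lam[OF z], of A] A sets_lam inv[OF z A] by simp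
qed

lemma Kn2_meas[measurable]: "(\<lambda>x. (Kn x)\<^sup>2) \<in> borel_measurable \<sigma>" by measurable

lemma lam_density: "lam = density \<sigma> (\<lambda>x. ennreal ((Kn x)\<^sup>2))"
  unfolding blambda_def ..

lemma CV:
  fixes F :: "complex ^ 'n \<Rightarrow> 'b::{banach, second_countable_topology}"
  assumes z: "z \<in> \<Omega>" and F[measurable]: "F \<in> borel_measurable \<sigma>"
  shows "(\<integral>y. F y \<partial>\<sigma>) = (\<integral>v. (cmod (k z v))\<^sup>2 *\<^sub>R F (\<phi> z v) \<partial>\<sigma>)"
    and "integrable \<sigma> F \<longleftrightarrow> integrable \<sigma> (\<lambda>v. (cmod (k z v))\<^sup>2 *\<^sub>R F (\<phi> z v))"
proof -
  define G where "G y = (1 / (Kn y)\<^sup>2) *\<^sub>R F y" for y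
  have Gm[measurable]: "G \<in> borel_measurable \<sigma>" unfolding G_def by measurable
  have Gm': "G \<in> borel_measurable lam" using Gm measurable_cong_sets[OF sets_lam refl] by blast
  have Gphi[measurable]: "(\<lambda>v. G (\<phi> z v)) \<in> borel_measurable \<sigma>"
    using measurable_compose[OF phi_meas[OF z] Gm] by simp
  have nn: "AE x in \<sigma>. 0 \<le> (Kn x)\<^sup>2" by simp
  have e1: "x \<in> space \<sigma> \<Longrightarrow> (Kn x)\<^sup>2 *\<^sub>R G x = F x" for x
    using Kn_pos[of x] space_sigma by (simp add: G_def)
  have e2: "x \<in> space \<sigma> \<Longrightarrow> (Kn x)\<^sup>2 *\<^sub>R G (\<phi> z x) = (cmod (k z x))\<^sup>2 *\<^sub>R F (\<phi> z x)" for x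
  proof -
    assume "x \<in> space \<sigma>"
    hence x: "x \<in> \<Omega>" using space_sigma by simp
    have p: "Kn x > 0" "Kn (\<phi> z x) > 0" using Kn_pos phi_in z x by auto
    have "(Kn x)\<^sup>2 *\<^sub>R G (\<phi> z x) = ((Kn x)\<^sup>2 / (Kn (\<phi> z x))\<^sup>2) *\<^sub>R F (\<phi> z x)"
      by (simp add: G_def)
    also have "(Kn x)\<^sup>2 / (Kn (\<phi> z x))\<^sup>2 = (cmod (k z x))\<^sup>2"
      using kn_norm[OF z x] by (simp add: power_divide)
    finally show ?thesis .
  qed
  have "(\<integral>y. F y \<partial>\<sigma>) = (\<integral>y. (Kn y)\<^sup>2 *\<^sub>R G y \<partial>\<sigma>)"
    by (rule Bochner_Integration.integral_cong[OF refl]) (simp add: e1[symmetric])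
  also have "\<dots> = integral\<^sup>L lam G"
    unfolding lam_density by (rule integral_density[symmetric]) (simp_all add: nn)
  also have "\<dots> = integral\<^sup>L (distr lam lam (\<phi> z)) G" by (simp add: distr_lam[OF z])
  also have "\<dots> = (\<integral>v. G (\<phi> z v) \<partial>lam)" by (rule integral_distr[OF phi_meas_lam[OF z] Gm'])
  also have "\<dots> = (\<integral>v. (Kn v)\<^sup>2 *\<^sub>R G (\<phi> z v) \<partial>\<sigma>)"
    unfolding lam_density by (rule integral_density) (simp_all add: nn)
  also have "\<dots> = (\<integral>v. (cmod (k z v))\<^sup>2 *\<^sub>R F (\<phi> z v) \<partial>\<sigma>)"
    by (rule Bochner_Integration.integral_cong[OF refl]) (simp add: e2)
  finally show "(\<integral>y. F y \<partial>\<sigma>) = (\<integral>v. (cmod (k z v))\<^sup>2 *\<^sub>R F (\<phi> z v) \<partial>\<sigma>)" .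
  have "integrable \<sigma> F \<longleftrightarrow> integrable \<sigma> (\<lambda>y. (Kn y)\<^sup>2 *\<^sub>R G y)"
    by (rule Bochner_Integration.integrable_cong[OF refl]) (simp add: e1[symmetric])
  also have "\<dots> \<longleftrightarrow> integrable lam G"
    unfolding lam_density by (rule integrable_density[symmetric]) (simp_all add: nn)
  also have "\<dots> \<longleftrightarrow> integrable (distr lam lam (\<phi> z)) G" by (simp add: distr_lam[OF z])
  also have "\<dots> \<longleftrightarrow> integrable lam (\<lambda>v. G (\<phi> z v))" by (rule integrable_distr_eq[OF phi_meas_lam[OF z] Gm'])
  also have "\<dots> \<longleftrightarrow> integrable \<sigma> (\<lambda>v. (Kn v)\<^sup>2 *\<^sub>R G (\<phi> z v))"
    unfolding lam_density by (rule integrable_density) (simp_all add: nn)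
  also have "\<dots> \<longleftrightarrow> integrable \<sigma> (\<lambda>v. (cmod (k z v))\<^sup>2 *\<^sub>R F (\<phi> z v))"
    by (rule Bochner_Integration.integrable_cong[OF refl]) (simp add: e2)
  finally show "integrable \<sigma> F \<longleftrightarrow> integrable \<sigma> (\<lambda>v. (cmod (k z v))\<^sup>2 *\<^sub>R F (\<phi> z v))" .
qed

end



context SB begin

lemma one_L2: "L2 \<sigma> (\<lambda>_. 1)" using one_in B_L2 by blast

lemma K0_one: assumes w: "w \<in> \<Omega>" shows "K 0 w = 1"
proof -
  let ?a = "K 0"
  have k0: "k 0 x = K 0 x" for x using Kn0 by (simp add: kn_def)
  have L2a: "L2 \<sigma> ?a" using Kin[OF zeroO] B_L2 by blast
  have am[measurable]: "?a \<in> borel_measurable \<sigma>" using K_meas[OF zeroO] .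
  have ia: "integrable \<sigma> ?a" using L2_prod_int[OF L2a one_L2] by simp
  have ica: "integrable \<sigma> (\<lambda>x. cnj (?a x))" using L2_prod_int[OF one_L2 L2a] by simp
  have iaa: "integrable \<sigma> (\<lambda>x. ?a x * cnj (?a x))" using L2_prod_int[OF L2a L2a] .
  have i1: "integrable \<sigma> (\<lambda>x. 1::complex)" using L2_prod_int[OF one_L2 one_L2] by simp
  have "(\<integral>y. (1::real) \<partial>\<sigma>) = (\<integral>v. (cmod (k 0 v))\<^sup>2 *\<^sub>R (1::real) \<partial>\<sigma>)"
    using CV(1)[OF zeroO, of "\<lambda>_. 1::real"] by simp
  also have "\<dots> = (\<integral>v. (cmod (?a v))\<^sup>2 \<partial>\<sigma>)" by (simp add: k0)
  also have "\<dots> = 1" using Kn_sq[of 0] Kn0 by simp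
  finally have m1: "(\<integral>y. (1::real) \<partial>\<sigma>) = 1" .
  have c1: "(\<integral>y. (1::complex) \<partial>\<sigma>) = 1"
  proof -
    have "(\<integral>y. (1::complex) \<partial>\<sigma>) = (\<integral>y. complex_of_real 1 \<partial>\<sigma>)" by simp
    also have "\<dots> = complex_of_real (\<integral>y. (1::real) \<partial>\<sigma>)" by (rule integral_complex_of_real)
    finally show ?thesis using m1 by simp
  qed
  have cca: "(\<integral>x. cnj (?a x) \<partial>\<sigma>) = 1"
    using repro[OF one_in zeroO] unfolding L2_inner_def by simp
  have ca: "(\<integral>x. ?a x \<partial>\<sigma>) = 1"
  proof -
    have "cnj (\<integral>x. ?a x \<partial>\<sigma>) = (\<integral>x. cnj (?a x) \<partial>\<sigma>)"
      by simp
    thus ?thesis using cca by (metis complex_cnj_cnj complex_cnj_one)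
  qed
  have caa: "(\<integral>x. ?a x * cnj (?a x) \<partial>\<sigma>) = 1"
    using KK[OF zeroO zeroO] Kzz[OF zeroO] Kn0 unfolding L2_inner_def by simp
  define h where "h x = 1 - ?a x - cnj (?a x) + ?a x * cnj (?a x)" for x
  have hE: "h x = complex_of_real ((cmod (1 - ?a x))\<^sup>2)" for x
    unfolding h_def complex_norm_square by (simp add: algebra_simps)
  have ih: "integrable \<sigma> h" unfolding h_def using ia ica iaa i1 by auto
  have Ih: "(\<integral>x. h x \<partial>\<sigma>) = 0"
    unfolding h_def using ia ica iaa i1 c1 ca cca caa by simp
  have ir: "integrable \<sigma> (\<lambda>x. (cmod (1 - ?a x))\<^sup>2)"
    using ih unfolding hE complex_of_real_integrable_eq .
  have "complex_of_real (\<integral>x. (cmod (1 - ?a x))\<^sup>2 \<partial>\<sigma>) = 0"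
    using Ih unfolding hE integral_complex_of_real .
  hence I0: "(\<integral>x. (cmod (1 - ?a x))\<^sup>2 \<partial>\<sigma>) = 0" by simp
  have "AE x in \<sigma>. (cmod (1 - ?a x))\<^sup>2 = 0"
    using iffD1[OF integral_nonneg_eq_0_iff_AE[OF ir] I0] by simp
  hence AEa: "AE x in \<sigma>. ?a x * cnj (K w x) = 1 * cnj (K w x)" by (rule AE_mp) (intro AE_I2, simp)
  have Kwm[measurable]: "K w \<in> borel_measurable \<sigma>" using K_meas[OF w] .
  have "K 0 w = L2_inner \<sigma> (K 0) (K w)" using KK[OF zeroO w] .
  also have "\<dots> = (\<integral>x. 1 * cnj (K w x) \<partial>\<sigma>)"
    unfolding L2_inner_def by (rule integral_cong_AE[OF _ _ AEa]) simp_all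
  also have "\<dots> = L2_inner \<sigma> (\<lambda>_. 1) (K w)" unfolding L2_inner_def ..
  also have "\<dots> = 1" using repro[OF one_in w] by simp
  finally show ?thesis .
qed

lemma part1: "\<forall>w\<in>\<Omega>. k 0 w = 1"
  using K0_one Kn0 by (simp add: kn_def)

end



lemma holo_const_mod:
  fixes h :: "complex ^ 'n \<Rightarrow> complex"
  assumes S: "open S" "connected S" and hh: "holo_fun h S" and m: "\<forall>v\<in>S. cmod (h v) = 1"
  shows "\<exists>c. \<forall>v\<in>S. h v = c"
proof -
  have d0: "(h has_derivative (\<lambda>_. 0)) (at v)" if v: "v \<in> S" for v
  proof -
    obtain L where L: "(h has_derivative L) (at v)" "\<forall>x. L (\<i> *s x) = \<i> * L x"
      using hh v unfolding holo_fun_def by blast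
    have q1: "((\<lambda>x. h x * cnj (h x)) has_derivative (\<lambda>y. h v * cnj (L y) + L y * cnj (h v))) (at v)"
      by (rule has_derivative_mult[OF L(1) has_derivative_cnj[OF L(1)]])
    have q2: "((\<lambda>x. h x * cnj (h x)) has_derivative (\<lambda>_. 0)) (at v)"
    proof (rule has_derivative_transform_within_open[OF has_derivative_const[of 1] S(1) v])
      fix x assume "x \<in> S"
      hence "cmod (h x) = 1" using m by blast
      thus "1 = h x * cnj (h x)" using complex_norm_square[of "h x"] by simp
    qed
    have Q: "(\<lambda>y. h v * cnj (L y) + L y * cnj (h v)) = (\<lambda>_. 0)"
      using has_derivative_unique[OF q1 q2] .
    have hv: "h v \<noteq> 0" using m v by auto
    have "L y = 0" for y
    proof -
      define p where "p = L y * cnj (h v)"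
      have e1: "cnj p + p = 0" using fun_cong[OF Q, of y] unfolding p_def by (simp add: mult.commute)
      have "h v * cnj (L (\<i> *s y)) + L (\<i> *s y) * cnj (h v) = 0" using fun_cong[OF Q, of "\<i> *s y"] by simp
      moreover have "L (\<i> *s y) = \<i> * L y" using L(2) by blast
      ultimately have "h v * cnj (\<i> * L y) + \<i> * L y * cnj (h v) = 0" by simp
      moreover have "h v * cnj (\<i> * L y) + \<i> * L y * cnj (h v) = \<i> * (p - cnj p)"
        unfolding p_def by (simp add: algebra_simps)
      ultimately have "\<i> * (p - cnj p) = 0" by metis
      hence d: "p - cnj p = 0" by simp
      have "Re p = 0" using arg_cong[OF e1, of Re] by simp
      moreover have "Im p = 0" using arg_cong[OF d, of Im] by simp
      ultimately have "p = 0" by (simp add: complex_eq_iff)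
      thus ?thesis unfolding p_def using hv by simp
    qed
    hence "L = (\<lambda>_. 0)" by auto
    thus ?thesis using L(1) by simp
  qed
  have "h constant_on S"
  proof (rule has_derivative_zero_connected_constant_on[OF S(2) S(1) finite.emptyI])
    show "continuous_on S h" using hh by (rule holo_fun_continuous_on)
    show "\<forall>x\<in>S - {}. (h has_derivative (\<lambda>h. 0)) (at x within S)"
      using d0 has_derivative_at_withinI by blast
  qed
  thus ?thesis unfolding constant_on_def by blast
qed




lemma holo_fun_add:
  assumes "holo_fun f S" "holo_fun g S" shows "holo_fun (\<lambda>x. f x + g x) S"
  unfolding holo_fun_def
proof
  fix z assume z: "z \<in> S"
  obtain F where F: "(f has_derivative F) (at z)" "\<forall>x. F (\<i> *s x) = \<i> * F x" using assms(1) z unfolding holo_fun_def by blast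
  obtain G where G: "(g has_derivative G) (at z)" "\<forall>x. G (\<i> *s x) = \<i> * G x" using assms(2) z unfolding holo_fun_def by blast
  show "\<exists>L. ((\<lambda>x. f x + g x) has_derivative L) (at z) \<and> (\<forall>x. L (\<i> *s x) = \<i> * L x)"
    by (intro exI[of _ "\<lambda>h. F h + G h"] conjI has_derivative_add F G) (simp add: F(2) G(2) distrib_left)
qed

context SB begin

lemma kz_eq: "k z = (\<lambda>x. K z x / complex_of_real (Kn z))"
  by (rule ext) (simp add: kn_def)

lemma kz_holo: assumes z: "z \<in> \<Omega>" shows "holo_fun (k z) \<Omega>"
proof -
  have "Kn z > 0" using Kn_pos[OF z] .
  thus ?thesis unfolding kz_eq using Kin[OF z] B_holo
    by (intro holo_fun_divide holo_fun_const) auto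
qed

lemma kz_meas[measurable]: "z \<in> \<Omega> \<Longrightarrow> k z \<in> borel_measurable \<sigma>"
  using kz_holo holo_meas by blast

lemma Pop_eq: "x \<in> \<Omega> \<Longrightarrow> Pop \<sigma> K f x = (\<integral>y. f y * cnj (K x y) \<partial>\<sigma>)"
  unfolding Pop_def
  by (rule Bochner_Integration.integral_cong[OF refl])
     (simp add: space_sigma KK[symmetric] Ksym[of _ x] mult.commute)

lemma L2_holo_I:
  assumes "holo_fun f \<Omega>" "integrable \<sigma> (\<lambda>x. (cmod (f x))\<^sup>2)" shows "f \<in> B"
  using assms holo_meas unfolding bergman_space_def L2_def by blast

lemma part2:
  assumes u[measurable]: "u \<in> borel_measurable \<sigma>" and z: "z \<in> \<Omega>" and w: "w \<in> \<Omega>"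
  shows "cmod (Uop \<sigma> K \<phi> z (Top \<sigma> K u (k z)) w) = cmod (Pop \<sigma> K (u \<circ> \<phi> z) w)"
proof -
  let ?\<psi> = "\<phi> z" and ?k = "k z"
  have psiO: "x \<in> \<Omega> \<Longrightarrow> ?\<psi> x \<in> \<Omega>" for x using phi_in[OF z] .
  have psi2: "x \<in> \<Omega> \<Longrightarrow> ?\<psi> (?\<psi> x) = x" for x using phi_inv[OF z] .
  have knz: "x \<in> \<Omega> \<Longrightarrow> ?k x \<noteq> 0" for x using kn_nz[OF z] .
  have kholo: "holo_fun ?k \<Omega>" using kz_holo[OF z] .
  have kpsi_holo: "holo_fun (\<lambda>x. ?k (?\<psi> x)) \<Omega>"
    by (rule holo_fun_compose[OF kholo phi_holo[OF z]]) (use psiO in auto)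
  have psim[measurable]: "?\<psi> \<in> measurable \<sigma> \<sigma>" using phi_meas[OF z] .
  have wpsi: "?\<psi> w \<in> \<Omega>" using psiO[OF w] .
  have hmod: "\<forall>v\<in>\<Omega>. cmod (?k (?\<psi> v) * ?k v) = 1"
  proof
    fix v assume v: "v \<in> \<Omega>"
    have "cmod (?k (?\<psi> v) * ?k v) = (Kn (?\<psi> v) / Kn v) * (Kn v / Kn (?\<psi> v))"
      using kn_norm[OF z psiO[OF v]] kn_norm[OF z v] psi2[OF v] by (simp add: norm_mult)
    also have "\<dots> = 1" using Kn_pos[OF v] Kn_pos[OF psiO[OF v]] by simp
    finally show "cmod (?k (?\<psi> v) * ?k v) = 1" .
  qed
  obtain c where c: "\<forall>v\<in>\<Omega>. ?k (?\<psi> v) * ?k v = c"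
    using holo_const_mod[OF openO connO holo_fun_mult[OF kpsi_holo kholo] hmod] by blast
  have cmod_c: "cmod c = 1" using c hmod zeroO by metis
  \<comment> \<open>U_z K_{phi w} is a multiple of K_w\<close>
  define UK where "UK v = K (?\<psi> w) (?\<psi> v) * ?k v" for v
  have Kpw_holo: "holo_fun (K (?\<psi> w)) \<Omega>" using Kin[OF wpsi] B_holo by blast
  have UK_holo: "holo_fun UK \<Omega>"
    unfolding UK_def
    by (rule holo_fun_mult[OF holo_fun_compose[OF Kpw_holo phi_holo[OF z]] kholo]) (use psiO in auto)
  have UK_int: "integrable \<sigma> (\<lambda>v. (cmod (UK v))\<^sup>2)"
  proof -
    have Fm: "(\<lambda>y. (cmod (K (?\<psi> w) y))\<^sup>2) \<in> borel_measurable \<sigma>" using K_meas[OF wpsi] by measurable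
    have "integrable \<sigma> (\<lambda>y. (cmod (K (?\<psi> w) y))\<^sup>2)" using Kin[OF wpsi] B_L2 L2_int by blast
    hence "integrable \<sigma> (\<lambda>v. (cmod (?k v))\<^sup>2 *\<^sub>R (cmod (K (?\<psi> w) (?\<psi> v)))\<^sup>2)"
      using CV(2)[OF z Fm] by simp
    thus ?thesis unfolding UK_def by (simp add: norm_mult power_mult_distrib mult.commute)
  qed
  have UK_B: "UK \<in> B" using L2_holo_I[OF UK_holo UK_int] .
  have inner_UK: "L2_inner \<sigma> f UK = f w / ?k w" if f: "f \<in> B" for f
  proof -
    define g where "g y = f (?\<psi> y) / ?k (?\<psi> y)" for y
    have fholo: "holo_fun f \<Omega>" using f B_holo by blast
    have fm[measurable]: "f \<in> borel_measurable \<sigma>" using fholo holo_meas by blast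
    have g_holo: "holo_fun g \<Omega>"
      unfolding g_def
      by (rule holo_fun_divide[OF holo_fun_compose[OF fholo phi_holo[OF z]] kpsi_holo])
         (use psiO knz in auto)
    have gm[measurable]: "g \<in> borel_measurable \<sigma>" using g_holo holo_meas by blast
    have gpsi: "v \<in> \<Omega> \<Longrightarrow> g (?\<psi> v) = f v / ?k v" for v unfolding g_def using psi2 by simp
    have g_int: "integrable \<sigma> (\<lambda>y. (cmod (g y))\<^sup>2)"
    proof -
      have Fm: "(\<lambda>y. (cmod (g y))\<^sup>2) \<in> borel_measurable \<sigma>" by measurable
      have "integrable \<sigma> (\<lambda>v. (cmod (f v))\<^sup>2)" using f B_L2 L2_int by blast
      moreover have "v \<in> space \<sigma> \<Longrightarrow> (cmod (?k v))\<^sup>2 *\<^sub>R (cmod (g (?\<psi> v)))\<^sup>2 = (cmod (f v))\<^sup>2" for v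
        using gpsi[of v] knz[of v] space_sigma by (simp add: norm_divide power_divide)
      ultimately have "integrable \<sigma> (\<lambda>v. (cmod (?k v))\<^sup>2 *\<^sub>R (cmod (g (?\<psi> v)))\<^sup>2)"
        using Bochner_Integration.integrable_cong[OF refl] by (metis (no_types, lifting))
      thus ?thesis using CV(2)[OF z Fm] by simp
    qed
    have gB: "g \<in> B" using L2_holo_I[OF g_holo g_int] .
    have "f w / ?k w = g (?\<psi> w)" using gpsi[OF w] by simp
    also have "\<dots> = L2_inner \<sigma> g (K (?\<psi> w))" using repro[OF gB wpsi] .
    also have "\<dots> = (\<integral>y. g y * cnj (K (?\<psi> w) y) \<partial>\<sigma>)" unfolding L2_inner_def ..
    also have "\<dots> = (\<integral>v. (cmod (?k v))\<^sup>2 *\<^sub>R (g (?\<psi> v) * cnj (K (?\<psi> w) (?\<psi> v))) \<partial>\<sigma>)"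
    proof (rule CV(1)[OF z])
      show "(\<lambda>y. g y * cnj (K (?\<psi> w) y)) \<in> borel_measurable \<sigma>" using K_meas[OF wpsi] by measurable
    qed
    also have "\<dots> = (\<integral>v. f v * cnj (UK v) \<partial>\<sigma>)"
    proof (rule Bochner_Integration.integral_cong[OF refl])
      fix v assume "v \<in> space \<sigma>"
      hence v: "v \<in> \<Omega>" using space_sigma by simp
      have sq: "complex_of_real ((cmod (?k v))\<^sup>2) = ?k v * cnj (?k v)" by (rule complex_norm_square)
      show "(cmod (?k v))\<^sup>2 *\<^sub>R (g (?\<psi> v) * cnj (K (?\<psi> w) (?\<psi> v))) = f v * cnj (UK v)"
        unfolding scaleR_conv_of_real sq gpsi[OF v] UK_def using knz[OF v]
        by (simp add: field_simps)
    qed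
    also have "\<dots> = L2_inner \<sigma> f UK" unfolding L2_inner_def ..
    finally show ?thesis ..
  qed
  define \<alpha> where "\<alpha> = cnj (1 / ?k w)"
  define G where "G v = UK v + (- \<alpha>) * K w v" for v
  have Kw_holo: "holo_fun (K w) \<Omega>" using Kin[OF w] B_holo by blast
  have G_holo: "holo_fun G \<Omega>"
    unfolding G_def by (intro holo_fun_add UK_holo holo_fun_mult holo_fun_const Kw_holo)
  have L2UK: "L2 \<sigma> UK" using UK_B B_L2 by blast
  have L2Kw: "L2 \<sigma> (K w)" using Kin[OF w] B_L2 by blast
  have G_int: "integrable \<sigma> (\<lambda>x. (cmod (G x))\<^sup>2)"
  proof (rule Bochner_Integration.integrable_bound)
    show "integrable \<sigma> (\<lambda>x. 2 * (cmod (UK x))\<^sup>2 + 2 * (cmod \<alpha>)\<^sup>2 * (cmod (K w x))\<^sup>2)"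
      using L2UK L2Kw L2_int by (intro Bochner_Integration.integrable_add integrable_mult_right) auto
    show "(\<lambda>x. (cmod (G x))\<^sup>2) \<in> borel_measurable \<sigma>" using G_holo holo_meas by measurable
    show "AE x in \<sigma>. norm ((cmod (G x))\<^sup>2) \<le> norm (2 * (cmod (UK x))\<^sup>2 + 2 * (cmod \<alpha>)\<^sup>2 * (cmod (K w x))\<^sup>2)"
    proof (rule AE_I2)
      fix x
      define a where "a = cmod (UK x)"
      define b where "b = cmod \<alpha> * cmod (K w x)"
      have "cmod (G x) \<le> a + b" unfolding G_def a_def b_def
        by (metis norm_triangle_ineq norm_minus_cancel norm_mult)
      moreover have "0 \<le> cmod (G x)" by simp
      ultimately have "(cmod (G x))\<^sup>2 \<le> (a + b)\<^sup>2" by (rule power_mono)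
      also have "\<dots> \<le> 2 * a\<^sup>2 + 2 * b\<^sup>2"
      proof -
        have "0 \<le> (a - b)\<^sup>2" by simp
        thus ?thesis by (simp add: power2_sum power2_diff)
      qed
      finally show "norm ((cmod (G x))\<^sup>2) \<le> norm (2 * (cmod (UK x))\<^sup>2 + 2 * (cmod \<alpha>)\<^sup>2 * (cmod (K w x))\<^sup>2)"
        unfolding a_def b_def by (simp add: power_mult_distrib)
    qed
  qed
  have GB: "G \<in> B" using L2_holo_I[OF G_holo G_int] .
  have Gorth: "L2_inner \<sigma> f G = 0" if f: "f \<in> B" for f
  proof -
    have L2f: "L2 \<sigma> f" using f B_L2 by blast
    have i1: "integrable \<sigma> (\<lambda>x. f x * cnj (UK x))" using L2_prod_int[OF L2f L2UK] .
    have i2: "integrable \<sigma> (\<lambda>x. f x * cnj (K w x))" using L2_prod_int[OF L2f L2Kw] .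
    have "L2_inner \<sigma> f G = (\<integral>x. f x * cnj (UK x) - cnj \<alpha> * (f x * cnj (K w x)) \<partial>\<sigma>)"
      unfolding L2_inner_def G_def by (simp add: algebra_simps)
    also have "\<dots> = L2_inner \<sigma> f UK - cnj \<alpha> * L2_inner \<sigma> f (K w)"
      unfolding L2_inner_def using i1 i2 by simp
    also have "\<dots> = f w / ?k w - cnj \<alpha> * f w" using inner_UK[OF f] repro[OF f w] by simp
    also have "\<dots> = 0" unfolding \<alpha>_def by simp
    finally show ?thesis .
  qed
  have UKeq: "UK v = \<alpha> * K w v" if v: "v \<in> \<Omega>" for v
  proof -
    have "G v = L2_inner \<sigma> G (K v)" using repro[OF GB v] .
    also have "\<dots> = cnj (L2_inner \<sigma> (K v) G)" by (rule L2_inner_cnj)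
    also have "\<dots> = 0" using Gorth[OF Kin[OF v]] by simp
    finally show ?thesis unfolding G_def by simp
  qed
  have "Pop \<sigma> K (\<lambda>y. u y * ?k y) (?\<psi> w) = (\<integral>y. u y * ?k y * cnj (K (?\<psi> w) y) \<partial>\<sigma>)"
    using Pop_eq[OF wpsi] .
  also have "\<dots> = (\<integral>v. (cmod (?k v))\<^sup>2 *\<^sub>R (u (?\<psi> v) * ?k (?\<psi> v) * cnj (K (?\<psi> w) (?\<psi> v))) \<partial>\<sigma>)"
  proof (rule CV(1)[OF z])
    show "(\<lambda>y. u y * ?k y * cnj (K (?\<psi> w) y)) \<in> borel_measurable \<sigma>" using K_meas[OF wpsi] kz_meas[OF z] by measurable
  qed
  also have "\<dots> = (\<integral>v. c * (1 / ?k w) * (u (?\<psi> v) * cnj (K w v)) \<partial>\<sigma>)"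
  proof (rule Bochner_Integration.integral_cong[OF refl])
    fix v assume "v \<in> space \<sigma>"
    hence v: "v \<in> \<Omega>" using space_sigma by simp
    have sq: "complex_of_real ((cmod (?k v))\<^sup>2) = ?k v * cnj (?k v)" by (rule complex_norm_square)
    have e: "cnj (K (?\<psi> w) (?\<psi> v)) * cnj (?k v) = cnj (UK v)" unfolding UK_def by simp
    have "(cmod (?k v))\<^sup>2 *\<^sub>R (u (?\<psi> v) * ?k (?\<psi> v) * cnj (K (?\<psi> w) (?\<psi> v)))
        = (?k (?\<psi> v) * ?k v) * u (?\<psi> v) * (cnj (K (?\<psi> w) (?\<psi> v)) * cnj (?k v))"
      unfolding scaleR_conv_of_real sq by (simp add: ac_simps)
    also have "\<dots> = c * u (?\<psi> v) * cnj (\<alpha> * K w v)" unfolding e UKeq[OF v] using c v by simp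
    also have "\<dots> = c * (1 / ?k w) * (u (?\<psi> v) * cnj (K w v))" unfolding \<alpha>_def by simp
    finally show "(cmod (?k v))\<^sup>2 *\<^sub>R (u (?\<psi> v) * ?k (?\<psi> v) * cnj (K (?\<psi> w) (?\<psi> v)))
        = c * (1 / ?k w) * (u (?\<psi> v) * cnj (K w v))" .
  qed
  also have "\<dots> = c * (1 / ?k w) * (\<integral>v. u (?\<psi> v) * cnj (K w v) \<partial>\<sigma>)" by simp
  also have "(\<integral>v. u (?\<psi> v) * cnj (K w v) \<partial>\<sigma>) = Pop \<sigma> K (u \<circ> ?\<psi>) w"
    using Pop_eq[OF w, of "u \<circ> ?\<psi>"] by simp
  finally have P: "Pop \<sigma> K (\<lambda>y. u y * ?k y) (?\<psi> w) = c * (1 / ?k w) * Pop \<sigma> K (u \<circ> ?\<psi>) w" .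
  have "Uop \<sigma> K \<phi> z (Top \<sigma> K u ?k) w = Pop \<sigma> K (\<lambda>y. u y * ?k y) (?\<psi> w) * ?k w"
    unfolding Uop_def Top_def ..
  also have "\<dots> = c * Pop \<sigma> K (u \<circ> ?\<psi>) w" unfolding P using knz[OF w] by simp
  finally show ?thesis using cmod_c by (simp add: norm_mult)
qed

end


theorem mainTheorem8:
  fixes \<Omega> :: "(complex ^ 'n) set" and \<sigma> :: "(complex ^ 'n) measure"
    and d :: "complex ^ 'n \<Rightarrow> complex ^ 'n \<Rightarrow> real"
    and \<phi> :: "complex ^ 'n \<Rightarrow> complex ^ 'n \<Rightarrow> complex ^ 'n"
    and K :: "complex ^ 'n \<Rightarrow> complex ^ 'n \<Rightarrow> complex"
  assumes "strong_bergman_type \<Omega> \<sigma> d \<phi> K"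
  shows "(\<forall>w\<in>\<Omega>. kn \<sigma> K 0 w = 1) \<and>
    (\<forall>u. u \<in> borel_measurable \<sigma> \<and> (\<forall>z\<in>\<Omega>. L2 \<sigma> (u \<circ> \<phi> z)) \<longrightarrow>
      (\<forall>z\<in>\<Omega>. \<forall>w\<in>\<Omega>. cmod (Uop \<sigma> K \<phi> z (Top \<sigma> K u (kn \<sigma> K z)) w) = cmod (Pop \<sigma> K (u \<circ> \<phi> z) w)))"
proof -
  interpret SB \<Omega> \<sigma> d \<phi> K by (rule SB.intro) (rule assms)
  show ?thesis using part1 part2 by blast
qed

end
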